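(* Let $A$ be a balanced parenthesis sequence inducing the ordered matching $M$. Then $(A)$ is a balanced parenthesis sequence; let $M'$ be the matching it induces and let $|M'|$ denote the number of vertices of $M'$. Then $$r_<(M',K_3)\le r_<(M,K_3)+|M'|+1.$$
   Context: An ordered graph on $[N]$ is a graph with vertex set $\{1,\dots,N\}$ equipped with the natural order. Given a red/blue coloring of the edges of the complete graph on $[N]$, a red (ordered) copy of an ordered graph $G$ on $[p]$ is a strictly increasing map $\varphi:[p]\to[N]$ such that $\varphi(u)\varphi(v)$ is red for every edge $uv$ of $G$. The ordered Ramsey number $r_<(G,K_3)$ is the smallest $N$ such that every red/blue coloring of the edges of the complete graph on $[N]$ contains either a red ordered copy of $G$ or a blue triangle. A balanced parenthesis sequence of length $2m$ is a correctly matched string of $m$ open and $m$ close parentheses (possibly empty); it induces the ordered matching on $[2m]$ whose edges are the pairs $\{i,j\}$ such that the parenthesis at position $i$ is an open parenthesis matched with the close parenthesis at position $j$. *)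

theory Defs
  imports Main
begin

text \<open>Parenthesis sequences are bool lists: True = open parenthesis, False = close.
  Positions are 1-indexed: position i is the element xs ! (i - 1).\<close>

inductive balanced :: "bool list \<Rightarrow> bool" where
  bal_Nil: "balanced []"
| bal_wrap: "balanced A \<Longrightarrow> balanced (True # A @ [False])"
| bal_app: "balanced A \<Longrightarrow> balanced B \<Longrightarrow> balanced (A @ B)"

definition matching_edges :: "bool list \<Rightarrow> nat set set" where
  "matching_edges A = {{i, j} | i j. 1 \<le> i \<and> i < j \<and> j \<le> length A \<and>
      A ! (i - 1) \<and> \<not> A ! (j - 1) \<and> balanced (take (j - i - 1) (drop i A))}"

text \<open>An ordered graph on [p] is given by p and an edge set E of 2-subsets of {1..p}.
  A colouring of the complete graph on [N] is c :: nat set => bool, c {u,v} = True meaning red.\<close>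
definition red_ordered_copy ::
    "nat \<Rightarrow> nat set set \<Rightarrow> nat \<Rightarrow> (nat set \<Rightarrow> bool) \<Rightarrow> (nat \<Rightarrow> nat) \<Rightarrow> bool" where
  "red_ordered_copy p E N c \<phi> \<longleftrightarrow>
     strict_mono_on {1..p} \<phi> \<and> \<phi> ` {1..p} \<subseteq> {1..N} \<and> (\<forall>e\<in>E. c (\<phi> ` e))"

definition blue_triangle :: "nat \<Rightarrow> (nat set \<Rightarrow> bool) \<Rightarrow> bool" where
  "blue_triangle N c \<longleftrightarrow> (\<exists>a b d. 1 \<le> a \<and> a < b \<and> b < d \<and> d \<le> N \<and>
      \<not> c {a, b} \<and> \<not> c {b, d} \<and> \<not> c {a, d})"

definition ord_ramsey_K3 :: "nat \<Rightarrow> nat set set \<Rightarrow> nat" where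
  "ord_ramsey_K3 p E = (LEAST N. \<forall>c. (\<exists>\<phi>. red_ordered_copy p E N c \<phi>) \<or> blue_triangle N c)"

end

theory Submission
  imports Defs
begin


lemma enum_exists:
  fixes S :: "nat set"
  assumes "finite S" "n \<le> card S"
  shows "\<exists>e. strict_mono_on {1..n} e \<and> e ` {1..n} \<subseteq> S"
proof -
  define xs where "xs = sorted_list_of_set S"
  have ss: "sorted_wrt (<) xs" unfolding xs_def by simp
  have len: "length xs = card S" unfolding xs_def by simp
  have st: "set xs = S" unfolding xs_def using assms(1) by simp
  define e where "e i = xs ! (i - 1)" for i
  have "strict_mono_on {1..n} e"
    unfolding strict_mono_on_def e_def
  proof (intro allI impI, elim conjE)
    fix r s assume "r \<in> {1..n}" "s \<in> {1..n}" "r < s"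
    then show "xs ! (r - 1) < xs ! (s - 1)" using ss len assms(2)
      by (auto simp: sorted_wrt_iff_nth_less)
  qed
  moreover have "e ` {1..n} \<subseteq> S"
    using len assms(2) st unfolding e_def by auto
  ultimately show ?thesis by blast
qed

definition nbt :: "nat set \<Rightarrow> (nat set \<Rightarrow> bool) \<Rightarrow> bool" where
  "nbt S c = (\<forall>a\<in>S. \<forall>b\<in>S. \<forall>d\<in>S. a \<noteq> b \<longrightarrow> b \<noteq> d \<longrightarrow> a \<noteq> d \<longrightarrow> c {a,b} \<or> c {b,d} \<or> c {a,d})"

lemma nbt_of:
  assumes "\<not> blue_triangle N c" "S \<subseteq> {1..N}"
  shows "nbt S c"
proof -
  have H: "c {a,b} \<or> c {b,d} \<or> c {a,d}" if "1 \<le> a" "a < b" "b < d" "d \<le> N" for a b d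
    using assms(1) that unfolding blue_triangle_def by blast
  show ?thesis unfolding nbt_def
  proof (intro ballI impI)
    fix a b d assume abd: "a \<in> S" "b \<in> S" "d \<in> S" "a \<noteq> b" "b \<noteq> d" "a \<noteq> d"
    then have r: "1 \<le> a" "a \<le> N" "1 \<le> b" "b \<le> N" "1 \<le> d" "d \<le> N" using assms(2) by auto
    show "c {a,b} \<or> c {b,d} \<or> c {a,d}"
      using abd r H[of a b d] H[of a d b] H[of b a d] H[of b d a] H[of d a b] H[of d b a]
      by (cases a b rule: linorder_cases; cases b d rule: linorder_cases; cases a d rule: linorder_cases)
         (auto simp: insert_commute)
  qed
qed

lemma clique_exists:
  "\<exists>N. \<forall>c S. finite S \<and> N \<le> card S \<and> nbt S c \<longrightarrow>
     (\<exists>K\<subseteq>S. card K = p \<and> (\<forall>x\<in>K. \<forall>y\<in>K. x \<noteq> y \<longrightarrow> c {x,y}))"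
proof (induction p)
  case 0
  then show ?case by (intro exI[of _ 0]) auto
next
  case (Suc p)
  then obtain N where N: "\<And>c S. finite S \<Longrightarrow> N \<le> card S \<Longrightarrow> nbt S c \<Longrightarrow>
     (\<exists>K\<subseteq>S. card K = p \<and> (\<forall>x\<in>K. \<forall>y\<in>K. x \<noteq> y \<longrightarrow> c {x,y}))" by blast
  show ?case
  proof (intro exI[of _ "N + p + 1"] allI impI, elim conjE)
    fix c S assume fS: "finite S" and cS: "N + p + 1 \<le> card S" and nb: "nbt S c"
    then obtain v where v: "v \<in> S" by fastforce
    define B where "B = {y\<in>S - {v}. \<not> c {v,y}}"
    define R where "R = {y\<in>S - {v}. c {v,y}}"
    have un: "B \<union> R = S - {v}" "B \<inter> R = {}" unfolding B_def R_def by auto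
    have fB: "finite B" "finite R" using fS unfolding B_def R_def by auto
    have "card B + card R = card S - 1"
      using card_Un_disjoint[OF fB un(2)] un(1) v fS by simp
    then consider "p + 1 \<le> card B" | "N \<le> card R" using cS by linarith
    then show "\<exists>K\<subseteq>S. card K = Suc p \<and> (\<forall>x\<in>K. \<forall>y\<in>K. x \<noteq> y \<longrightarrow> c {x,y})"
    proof cases
      case 1
      then obtain K where K: "K \<subseteq> B" "card K = Suc p"
        by (metis Suc_eq_plus1 obtain_subset_with_card_n)
      have "\<forall>x\<in>K. \<forall>y\<in>K. x \<noteq> y \<longrightarrow> c {x,y}"
      proof (intro ballI impI)
        fix x y assume "x \<in> K" "y \<in> K" "x \<noteq> y"
        then have "x \<in> B" "y \<in> B" using K by auto
        then show "c {x,y}" using nb v \<open>x \<noteq> y\<close> unfolding nbt_def B_def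
          by (metis (no_types, lifting) DiffE insertCI mem_Collect_eq)
      qed
      then show ?thesis using K unfolding B_def by blast
    next
      case 2
      have "nbt R c" using nb unfolding nbt_def R_def by blast
      then obtain K where K: "K \<subseteq> R" "card K = p" "\<forall>x\<in>K. \<forall>y\<in>K. x \<noteq> y \<longrightarrow> c {x,y}"
        using N[OF fB(2) 2] by blast
      have vK: "v \<notin> K" using K(1) unfolding R_def by auto
      have fK: "finite K" using K(1) fB(2) finite_subset by blast
      have "insert v K \<subseteq> S" using K(1) v unfolding R_def by auto
      moreover have "card (insert v K) = Suc p" using vK fK K(2) by simp
      moreover have "\<forall>x\<in>insert v K. \<forall>y\<in>insert v K. x \<noteq> y \<longrightarrow> c {x,y}"
        using K(1,3) unfolding R_def by (auto simp: insert_commute)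
      ultimately show ?thesis by blast
    qed
  qed
qed


definition hs :: "bool list \<Rightarrow> int" where
  "hs xs = sum_list (map (\<lambda>b. if b then 1 else -1) xs)"

lemma hs_simps[simp]: "hs [] = 0" "hs (x # xs) = (if x then 1 else -1) + hs xs"
  "hs (xs @ ys) = hs xs + hs ys"
  by (auto simp: hs_def)

lemma bal_hs: "balanced xs \<Longrightarrow> hs xs = 0 \<and> (\<forall>k. 0 \<le> hs (take k xs))"
proof (induction rule: balanced.induct)
  case bal_Nil
  then show ?case by simp
next
  case (bal_wrap A)
  have "0 \<le> hs (take k (True # A @ [False]))" for k
  proof (cases k)
    case (Suc k')
    have "hs (take k' (A @ [False])) \<ge> -1"
      using bal_wrap.IH by (cases "k' - length A") (auto, smt (verit))
    then show ?thesis using Suc by simp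
  qed simp
  then show ?case using bal_wrap.IH by simp
next
  case (bal_app A B)
  have "0 \<le> hs (take k (A @ B))" for k
    using bal_app.IH by (cases "k \<le> length A") auto
  then show ?case using bal_app.IH by simp
qed

lemma wnth: "k < length A \<Longrightarrow> (True # A @ [False]) ! Suc k = A ! k"
  by (simp add: nth_append)

lemma wrap_edges:
  assumes "balanced A"
  shows "matching_edges (True # A @ [False]) \<subseteq>
     insert {1, length A + 2} ((\<lambda>e. Suc ` e) ` matching_edges A)"
proof
  fix e assume "e \<in> matching_edges (True # A @ [False])"
  then obtain i j where e: "e = {i,j}" and ij: "1 \<le> i" "i < j" "j \<le> length A + 2"
    and oi: "(True # A @ [False]) ! (i - 1)" and cj: "\<not> (True # A @ [False]) ! (j - 1)"
    and bt: "balanced (take (j - i - 1) (drop i (True # A @ [False])))"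
    unfolding matching_edges_def by auto
  have hA: "hs A = 0" "\<And>k. 0 \<le> hs (take k A)" using bal_hs[OF assms] by auto
  show "e \<in> insert {1, length A + 2} ((\<lambda>e. Suc ` e) ` matching_edges A)"
  proof (cases "i = 1")
    case True
    show ?thesis
    proof (cases "j = length A + 2")
      case False
      then have j2: "j - 2 < length A" using ij True by auto
      have jj: "j - 1 = Suc (j - 2)" "j - i - 1 = j - 2" using ij True by auto
      have tk: "take (j - i - 1) (drop i (True # A @ [False])) = take (j - 2) A"
        unfolding jj(2) using True j2 by simp
      have "hs (take (j - 2) A) = 0" using bal_hs[OF bt[unfolded tk]] by simp
      moreover have "\<not> A ! (j - 2)" using cj wnth[OF j2] unfolding jj(1) by simp
      ultimately have "hs (take (Suc (j - 2)) A) = -1"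
        using j2 by (simp add: take_Suc_conv_app_nth)
      then show ?thesis using hA(2)[of "Suc (j - 2)"] by simp
    next
      case True
      then show ?thesis using e \<open>i = 1\<close> by blast
    qed
  next
    case False
    then have i2: "2 \<le> i" using ij by simp
    show ?thesis
    proof (cases "j = length A + 2")
      case True
      have i2l: "i - 2 < length A" using True ij i2 by simp
      have ii: "Suc (i - 2) = i - 1" "i = Suc (i - 1)" using i2 by auto
      have tk: "take (j - i - 1) (drop i (True # A @ [False])) = drop (i - 1) A"
        using True i2 by (simp add: drop_Cons')
      have hd0: "hs (drop (i - 1) A) = 0" using bal_hs[OF bt[unfolded tk]] by simp
      have Ai: "A ! (i - 2)" using oi wnth[OF i2l] ii(1) by simp
      have Aeq: "take (i - 2) A @ A ! (i - 2) # drop (i - 1) A = A"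
        using id_take_nth_drop[OF i2l] ii(1) by simp
      have "hs A = hs (take (i - 2) A @ A ! (i - 2) # drop (i - 1) A)"
        by (simp only: Aeq)
      also have "\<dots> = hs (take (i - 2) A) + 1 + hs (drop (i - 1) A)"
        using Ai by simp
      finally have "hs A = hs (take (i - 2) A) + 1 + hs (drop (i - 1) A)" .
      then have "hs (take (i - 2) A) = -1" using hA(1) hd0 by simp
      then show ?thesis using hA(2)[of "i - 2"] by simp
    next
      case False
      then have jl: "j - 2 < length A" using ij by simp
      have "take (j - i - 1) (drop i (True # A @ [False])) =
            take (j - 1 - (i - 1) - 1) (drop (i - 1) A)"
        using i2 jl ij by (simp add: drop_Cons')
      moreover have "A ! (i - 1 - 1)" using oi wnth[of "i - 2" A] i2 jl ij
        by (simp add: numeral_2_eq_2)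
      moreover have "\<not> A ! (j - 1 - 1)" using cj wnth[OF jl] i2 jl ij
        by (simp add: numeral_2_eq_2)
      ultimately have "{i - 1, j - 1} \<in> matching_edges A"
        unfolding matching_edges_def using bt i2 jl ij
        by (intro CollectI exI[of _ "i - 1"] exI[of _ "j - 1"]) auto
      moreover have "e = Suc ` {i - 1, j - 1}" using e i2 ij by auto
      ultimately show ?thesis by blast
    qed
  qed
qed


definition Pr :: "nat \<Rightarrow> nat set set \<Rightarrow> nat \<Rightarrow> bool" where
  "Pr p E N = (\<forall>c. (\<exists>\<phi>. red_ordered_copy p E N c \<phi>) \<or> blue_triangle N c)"

lemma transfer:
  assumes "Pr p E n" "finite S" "n \<le> card S" "nbt S c"
  shows "\<exists>\<psi>. strict_mono_on {1..p} \<psi> \<and> \<psi> ` {1..p} \<subseteq> S \<and> (\<forall>e\<in>E. c (\<psi> ` e))"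
proof -
  obtain f where f: "strict_mono_on {1..n} f" "f ` {1..n} \<subseteq> S"
    using enum_exists[OF assms(2,3)] by blast
  define c' where "c' X = c (f ` X)" for X
  from assms(1) have "(\<exists>\<phi>. red_ordered_copy p E n c' \<phi>) \<or> blue_triangle n c'"
    unfolding Pr_def by blast
  then show ?thesis
  proof
    assume "\<exists>\<phi>. red_ordered_copy p E n c' \<phi>"
    then obtain \<phi> where \<phi>: "strict_mono_on {1..p} \<phi>" "\<phi> ` {1..p} \<subseteq> {1..n}"
      "\<forall>e\<in>E. c' (\<phi> ` e)" unfolding red_ordered_copy_def by blast
    have "strict_mono_on {1..p} (f \<circ> \<phi>)"
      unfolding strict_mono_on_def
    proof (intro allI impI, elim conjE)
      fix r s assume rs: "r \<in> {1..p}" "s \<in> {1..p}" "r < s"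
      then have "\<phi> r < \<phi> s"
        using \<phi>(1) unfolding strict_mono_on_def by blast
      moreover have "\<phi> r \<in> {1..n}" "\<phi> s \<in> {1..n}" using \<phi>(2) rs by blast+
      ultimately show "(f \<circ> \<phi>) r < (f \<circ> \<phi>) s"
        using f(1) unfolding strict_mono_on_def by auto
    qed
    moreover have "(f \<circ> \<phi>) ` {1..p} \<subseteq> S" using \<phi>(2) f(2) by (auto simp: image_comp[symmetric])
    moreover have "\<forall>e\<in>E. c ((f \<circ> \<phi>) ` e)" using \<phi>(3) unfolding c'_def by (simp add: image_comp)
    ultimately show ?thesis by blast
  next
    assume "blue_triangle n c'"
    then obtain a b d where abd: "1 \<le> a" "a < b" "b < d" "d \<le> n"
      "\<not> c' {a, b}" "\<not> c' {b, d}" "\<not> c' {a, d}" unfolding blue_triangle_def by blast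
    have lt: "f a < f b" "f b < f d" using abd f(1) unfolding strict_mono_on_def by auto
    have "f a \<in> S" "f b \<in> S" "f d \<in> S" using abd f(2) by auto
    then have False using assms(4) lt abd(5-7) unfolding nbt_def c'_def by fastforce
    then show ?thesis ..
  qed
qed

lemma clique_copy:
  fixes K :: "nat set"
  assumes "finite K" "p \<le> card K" "\<forall>x\<in>K. \<forall>y\<in>K. x \<noteq> y \<longrightarrow> c {x,y}"
    "E \<subseteq> {{i, j} | i j. 1 \<le> i \<and> i < j \<and> j \<le> p}"
  shows "\<exists>\<psi>. strict_mono_on {1..p} \<psi> \<and> \<psi> ` {1..p} \<subseteq> K \<and> (\<forall>e\<in>E. c (\<psi> ` e))"
proof -
  obtain f where f: "strict_mono_on {1..p} f" "f ` {1..p} \<subseteq> K"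
    using enum_exists[OF assms(1,2)] by blast
  have "\<forall>e\<in>E. c (f ` e)"
  proof
    fix e assume "e \<in> E"
    then obtain i j where ij: "e = {i,j}" "1 \<le> i" "i < j" "j \<le> p" using assms(4) by blast
    then have "f i < f j" "f i \<in> K" "f j \<in> K" using f unfolding strict_mono_on_def by auto
    then show "c (f ` e)" using assms(3) ij(1) by simp
  qed
  then show ?thesis using f by blast
qed

lemma me_sub: "matching_edges A \<subseteq> {{i, j} | i j. 1 \<le> i \<and> i < j \<and> j \<le> length A}"
  unfolding matching_edges_def by blast

lemma Pr_exists:
  assumes "E \<subseteq> {{i, j} | i j. 1 \<le> i \<and> i < j \<and> j \<le> p}"
  shows "\<exists>N. Pr p E N"
proof -
  obtain N where N: "\<And>c S. finite S \<Longrightarrow> N \<le> card S \<Longrightarrow> nbt S c \<Longrightarrow>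
     (\<exists>K\<subseteq>S. card K = p \<and> (\<forall>x\<in>K. \<forall>y\<in>K. x \<noteq> y \<longrightarrow> c {x,y}))"
    using clique_exists[of p] by blast
  have "Pr p E N" unfolding Pr_def
  proof
    fix c
    show "(\<exists>\<phi>. red_ordered_copy p E N c \<phi>) \<or> blue_triangle N c"
    proof (cases "blue_triangle N c")
      case False
      then have "nbt {1..N} c" using nbt_of by blast
      then obtain K where K: "K \<subseteq> {1..N}" "card K = p" "\<forall>x\<in>K. \<forall>y\<in>K. x \<noteq> y \<longrightarrow> c {x,y}"
        using N[of "{1..N}" c] by auto
      have "finite K" using K(1) finite_subset by blast
      then obtain \<psi> where "strict_mono_on {1..p} \<psi>" "\<psi> ` {1..p} \<subseteq> K" "\<forall>e\<in>E. c (\<psi> ` e)"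
        using clique_copy[of K p c E] K assms by auto
      then show ?thesis using K(1) unfolding red_ordered_copy_def by blast
    qed simp
  qed
  then show ?thesis ..
qed


lemma main_step:
  assumes bal: "balanced A" and P: "Pr (length A) (matching_edges A) n"
  shows "Pr (length A + 2) (matching_edges (True # A @ [False])) (n + (length A + 2) + 1)"
  unfolding Pr_def
proof
  fix c
  define p where "p = length A"
  define q where "q = p + 2"
  define N where "N = n + q + 1"
  show "(\<exists>\<phi>. red_ordered_copy (length A + 2) (matching_edges (True # A @ [False]))
          (n + (length A + 2) + 1) c \<phi>) \<or> blue_triangle (n + (length A + 2) + 1) c"
  proof (cases "blue_triangle N c")
    case True then show ?thesis unfolding N_def q_def p_def by simp
  next
    case False
    have nb: "nbt {1..N} c" using nbt_of[OF False] by blast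
    define S where "S = {2..N}"
    define B where "B = {y\<in>S. \<not> c {1,y}}"
    define R where "R = {y\<in>S. c {1,y}}"
    have un: "B \<union> R = S" "B \<inter> R = {}" unfolding B_def R_def by auto
    have fB: "finite B" "finite R" unfolding B_def R_def S_def by auto
    have "card B + card R = N - 1"
      using card_Un_disjoint[OF fB un(2)] un(1) unfolding S_def by simp
    then consider "q \<le> card B" | "n + 1 \<le> card R" unfolding N_def by linarith
    then have "\<exists>\<phi>. red_ordered_copy q (matching_edges (True # A @ [False])) N c \<phi>"
    proof cases
      case 1
      have cl: "\<forall>x\<in>B. \<forall>y\<in>B. x \<noteq> y \<longrightarrow> c {x,y}"
      proof (intro ballI impI)
        fix x y assume xy: "x \<in> B" "y \<in> B" "x \<noteq> y"
        then have "x \<in> {1..N}" "y \<in> {1..N}" "1 \<in> {1..N}" "x \<noteq> 1" "y \<noteq> 1"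
          "\<not> c {1,x}" "\<not> c {1,y}" unfolding B_def S_def N_def by auto
        then show "c {x,y}" using nb xy(3) unfolding nbt_def by metis
      qed
      have "matching_edges (True # A @ [False]) \<subseteq> {{i, j} | i j. 1 \<le> i \<and> i < j \<and> j \<le> q}"
        using me_sub[of "True # A @ [False]"] unfolding q_def p_def by simp
      then obtain \<psi> where \<psi>: "strict_mono_on {1..q} \<psi>" "\<psi> ` {1..q} \<subseteq> B"
        "\<forall>e\<in>matching_edges (True # A @ [False]). c (\<psi> ` e)"
        using clique_copy[OF fB(1) 1 cl] by blast
      have "B \<subseteq> {1..N}" unfolding B_def S_def by auto
      then show ?thesis using \<psi> unfolding red_ordered_copy_def by blast
    next
      case 2
      then have Rne: "R \<noteq> {}" by auto
      define b where "b = Max R"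
      have bR: "b \<in> R" using Max_in[OF fB(2) Rne] unfolding b_def .
      have bmax: "\<And>x. x \<in> R \<Longrightarrow> x \<le> b" using Max_ge[OF fB(2)] unfolding b_def by blast
      define R' where "R' = R - {b}"
      have fR': "finite R'" using fB(2) unfolding R'_def by simp
      have cR': "n \<le> card R'" using 2 bR fB(2) unfolding R'_def by simp
      have nbR: "nbt R' c" using nb unfolding nbt_def R'_def R_def S_def by auto
      obtain \<psi> where \<psi>: "strict_mono_on {1..p} \<psi>" "\<psi> ` {1..p} \<subseteq> R'"
        "\<forall>e\<in>matching_edges A. c (\<psi> ` e)"
        using transfer[OF P fR' cR' nbR] unfolding p_def by blast
      have R'b: "\<And>x. x \<in> R' \<Longrightarrow> 2 \<le> x \<and> x < b \<and> x \<le> N"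
        using bmax unfolding R'_def R_def S_def by fastforce
      have b2: "2 \<le> b" "b \<le> N" "c {1, b}" using bR unfolding R_def S_def by auto
      define \<phi> where "\<phi> i = (if i = 1 then 1 else if i = q then b else \<psi> (i - 1))" for i
      have \<phi>mid: "\<phi> i = \<psi> (i - 1)" "\<psi> (i - 1) \<in> R'" if "2 \<le> i" "i < q" for i
      proof -
        have "i - 1 \<in> {1..p}" using that unfolding q_def by auto
        then have "\<psi> (i - 1) \<in> R'" using \<psi>(2) by blast
        then show "\<phi> i = \<psi> (i - 1)" "\<psi> (i - 1) \<in> R'" using that unfolding \<phi>_def by auto
      qed
      have sm: "strict_mono_on {1..q} \<phi>"
        unfolding strict_mono_on_def
      proof (intro allI impI, elim conjE)
        fix r s assume rs: "r \<in> {1..q}" "s \<in> {1..q}" "r < s"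
        show "\<phi> r < \<phi> s"
        proof (cases "r = 1")
          case True
          then show ?thesis
          proof (cases "s = q")
            case True then show ?thesis using \<open>r = 1\<close> b2 unfolding \<phi>_def q_def by simp
          next
            case False
            then have "2 \<le> s" "s < q" using rs True by auto
            then show ?thesis using \<phi>mid[of s] R'b \<open>r = 1\<close> unfolding \<phi>_def by fastforce
          qed
        next
          case False
          then have r2: "2 \<le> r" "r < q" using rs by auto
          show ?thesis
          proof (cases "s = q")
            case True then show ?thesis using \<phi>mid[OF r2] R'b r2 unfolding \<phi>_def by fastforce
          next
            case False
            then have s2: "2 \<le> s" "s < q" using rs r2 by auto
            have "r - 1 \<in> {1..p}" "s - 1 \<in> {1..p}" "r - 1 < s - 1"
              using r2 s2 rs unfolding q_def by auto
            then have "\<psi> (r - 1) < \<psi> (s - 1)" using \<psi>(1) unfolding strict_mono_on_def by blast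
            then show ?thesis using \<phi>mid[OF r2] \<phi>mid[OF s2] by simp
          qed
        qed
      qed
      have im: "\<phi> ` {1..q} \<subseteq> {1..N}"
      proof
        fix y assume "y \<in> \<phi> ` {1..q}"
        then obtain i where i: "i \<in> {1..q}" "y = \<phi> i" by blast
        show "y \<in> {1..N}"
        proof (cases "i = 1 \<or> i = q")
          case True then show ?thesis using i b2 unfolding \<phi>_def by auto
        next
          case False
          then have "2 \<le> i" "i < q" using i by auto
          then show ?thesis using \<phi>mid[of i] R'b i by fastforce
        qed
      qed
      have ed: "\<forall>e\<in>matching_edges (True # A @ [False]). c (\<phi> ` e)"
      proof
        fix e assume "e \<in> matching_edges (True # A @ [False])"
        then have "e \<in> insert {1, q} ((\<lambda>e. Suc ` e) ` matching_edges A)"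
          using wrap_edges[OF bal] unfolding q_def p_def by auto
        then show "c (\<phi> ` e)"
        proof
          assume "e = {1, q}"
          then have "\<phi> ` e = {1, b}" unfolding \<phi>_def q_def by auto
          then show ?thesis using b2 by simp
        next
          assume "e \<in> (\<lambda>e. Suc ` e) ` matching_edges A"
          then obtain e0 where e0: "e0 \<in> matching_edges A" "e = Suc ` e0" by blast
          then obtain i j where ij: "e0 = {i,j}" "1 \<le> i" "i < j" "j \<le> p"
            using me_sub[of A] unfolding p_def by blast
          have "\<phi> ` e = \<psi> ` e0" using e0(2) ij unfolding \<phi>_def q_def by auto
          then show ?thesis using \<psi>(3) e0(1) by simp
        qed
      qed
      show ?thesis using sm im ed unfolding red_ordered_copy_def by blast
    qed
    then show ?thesis unfolding N_def q_def p_def by simp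
  qed
qed

theorem lemma2p5:
  assumes "balanced A"
  shows "balanced (True # A @ [False]) \<and>
    ord_ramsey_K3 (length (True # A @ [False])) (matching_edges (True # A @ [False]))
      \<le> ord_ramsey_K3 (length A) (matching_edges A) + length (True # A @ [False]) + 1"
proof
  show "balanced (True # A @ [False])" using assms by (rule bal_wrap)
  have ex: "\<exists>N. Pr (length A) (matching_edges A) N" using Pr_exists[OF me_sub] .
  define n where "n = ord_ramsey_K3 (length A) (matching_edges A)"
  have eqL: "ord_ramsey_K3 p E = (LEAST N. Pr p E N)" for p E
    unfolding ord_ramsey_K3_def Pr_def ..
  have "Pr (length A) (matching_edges A) n"
    unfolding n_def eqL using LeastI_ex[OF ex] .
  then have "Pr (length A + 2) (matching_edges (True # A @ [False])) (n + (length A + 2) + 1)"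
    using main_step[OF assms] by blast
  then have "ord_ramsey_K3 (length A + 2) (matching_edges (True # A @ [False]))
     \<le> n + (length A + 2) + 1" unfolding eqL by (rule Least_le)
  then show "ord_ramsey_K3 (length (True # A @ [False])) (matching_edges (True # A @ [False]))
      \<le> ord_ramsey_K3 (length A) (matching_edges A) + length (True # A @ [False]) + 1"
    unfolding n_def by simp
qed

end
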